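(* Let $X$ be a non-negative random variable with finite mean $\mu>0$. For any integer $m\geqslant 2$ there exist constants $r_m,s_m>0$ such that \[ IG_{m;\min}(X)=G(X+r_m),\qquad IG_{m;\max}(X)=G(X+s_m), \] where for a non-negative random variable $Y$ with mean $\mu_Y>0$, $G(Y)=\dfrac{\mathbb{E}|Y_1-Y_2|}{2\mu_Y}$ is the classical Gini coefficient, $Y_1,Y_2$ being i.i.d. copies of $Y$.
   Context: For an integer $m\geqslant 2$ and i.i.d. copies $X_1,\ldots,X_m$ of $X$, the extended lower Gini index is $IG_{m;\min}(X)=\dfrac{\mathbb{E}[X_1-\min\{X_1,\ldots,X_m\}]}{m\mu}$ and the extended upper Gini index is $IG_{m;\max}(X)=\dfrac{\mathbb{E}[\max\{X_1,\ldots,X_m\}-X_1]}{m\mu}$. *)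

theory Defs
  imports "HOL-Probability.Probability"
begin

text \<open>All quantities below depend only on the law \<open>N\<close> (a probability measure on the
reals) of the random variable; i.i.d. copies are realised on the product measure.\<close>

definition mean :: "real measure \<Rightarrow> real" where
  "mean N = (\<integral>x. x \<partial>N)"

definition gini :: "real measure \<Rightarrow> real" where
  "gini N = (\<integral>y. \<bar>fst y - snd y\<bar> \<partial>(N \<Otimes>\<^sub>M N)) / (2 * mean N)"

definition IG_min :: "nat \<Rightarrow> real measure \<Rightarrow> real" where
  "IG_min m N =
     (\<integral>x. (x 0 - Min (x ` {..<m})) \<partial>(PiM {..<m} (\<lambda>_. N))) / (real m * mean N)"

definition IG_max :: "nat \<Rightarrow> real measure \<Rightarrow> real" where
  "IG_max m N =
     (\<integral>x. (Max (x ` {..<m}) - x 0) \<partial>(PiM {..<m} (\<lambda>_. N))) / (real m * mean N)"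

end

theory Submission
  imports Defs
begin

lemma comps_indep:
  fixes N :: "real measure"
  assumes N: "prob_space N" and sN: "sets N = sets borel"
  shows "prob_space.indep_vars (PiM {..<m::nat} (\<lambda>_. N)) (\<lambda>_. N) (\<lambda>i x. x i) {..<m}"
proof (cases "m = 0")
  case True
  then show ?thesis
    by (simp add: N prob_space.indep_vars_def prob_space.indep_sets_def prob_space_PiM)
next
  case False
  interpret M: prob_space "PiM {..<m} (\<lambda>_. N)" by (intro prob_space_PiM N)
  have "distr (PiM {..<m} (\<lambda>_. N)) (PiM {..<m} (\<lambda>_. N)) (\<lambda>x. \<lambda>i\<in>{..<m}. x i)
      = PiM {..<m} (\<lambda>i. distr (PiM {..<m} (\<lambda>_. N)) N (\<lambda>x. x i))"
  proof -
    have "PiM {..<m} (\<lambda>i. distr (PiM {..<m} (\<lambda>_. N)) N (\<lambda>x. x i)) = PiM {..<m} (\<lambda>_. N)"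
      by (rule PiM_cong) (use N distr_PiM_component[of "{..<m}" "\<lambda>_. N"] in auto)
    then show ?thesis
      using distr_PiM_reindex[of "{..<m}" "\<lambda>_. N" id "{..<m}"] N by simp
  qed
  moreover have "(\<lambda>x. x i) \<in> measurable (PiM {..<m} (\<lambda>_. N)) N" for i
  proof (cases "i < m")
    case True then show ?thesis by simp
  next
    case False
    have "(\<lambda>x. undefined) \<in> measurable (PiM {..<m} (\<lambda>_. N)) N"
      using sets_eq_imp_space_eq[OF sN] by simp
    then show ?thesis
      by (rule measurable_cong[THEN iffD1, rotated]) (use False in \<open>auto simp: space_PiM PiE_def extensional_def\<close>)
  qed
  ultimately show ?thesis
    using False by (subst M.indep_vars_iff_distr_eq_PiM) auto
qed

lemma pair_distr:
  fixes N :: "real measure"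
  assumes N: "prob_space N" and sN: "sets N = sets borel" and ij: "i < (m::nat)" "j < m" "i \<noteq> j"
  shows "distr (PiM {..<m} (\<lambda>_. N)) (N \<Otimes>\<^sub>M N) (\<lambda>x. (x i, x j)) = N \<Otimes>\<^sub>M N"
proof -
  interpret M: prob_space "PiM {..<m} (\<lambda>_. N)" by (intro prob_space_PiM N)
  have "M.indep_var (PiM {i} (\<lambda>_. N)) (\<lambda>\<omega>. restrict (\<lambda>k. \<omega> k) {i}) (PiM {j} (\<lambda>_. N)) (\<lambda>\<omega>. restrict (\<lambda>k. \<omega> k) {j})"
    using ij by (intro M.indep_var_restrict[OF comps_indep[OF N sN]]) auto
  then have "M.indep_var N ((\<lambda>f. f i) \<circ> (\<lambda>\<omega>. restrict (\<lambda>k. \<omega> k) {i})) N ((\<lambda>f. f j) \<circ> (\<lambda>\<omega>. restrict (\<lambda>k. \<omega> k) {j}))"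
    by (rule M.indep_var_compose) auto
  then have "M.indep_var N (\<lambda>\<omega>. \<omega> i) N (\<lambda>\<omega>. \<omega> j)"
    by (simp add: comp_def)
  then have "distr (PiM {..<m} (\<lambda>_. N)) N (\<lambda>\<omega>. \<omega> i) \<Otimes>\<^sub>M distr (PiM {..<m} (\<lambda>_. N)) N (\<lambda>\<omega>. \<omega> j)
     = distr (PiM {..<m} (\<lambda>_. N)) (N \<Otimes>\<^sub>M N) (\<lambda>x. (x i, x j))"
    by (simp add: M.indep_var_distribution_eq)
  then show ?thesis using distr_PiM_component[of "{..<m}" "\<lambda>_. N"] N ij by simp
qed

lemma comp_int:
  fixes N :: "real measure"
  assumes N: "prob_space N" and sN: "sets N = sets borel" and iN: "integrable N (\<lambda>x. x)" and i: "i < (m::nat)"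
  shows "integrable (PiM {..<m} (\<lambda>_. N)) (\<lambda>x. x i)"
    "(\<integral>x. x i \<partial>PiM {..<m} (\<lambda>_. N)) = (\<integral>x. x \<partial>N)"
proof -
  have d: "distr (PiM {..<m} (\<lambda>_. N)) N (\<lambda>x. x i) = N"
    using distr_PiM_component[of "{..<m}" "\<lambda>_. N" i] N i by simp
  have m: "(\<lambda>x. x i) \<in> measurable (PiM {..<m} (\<lambda>_. N)) N" using i by simp
  have b: "(\<lambda>x::real. x) \<in> borel_measurable N" by (subst measurable_cong_sets[OF sN refl]) simp
  show "integrable (PiM {..<m} (\<lambda>_. N)) (\<lambda>x. x i)"
    using integrable_distr_eq[OF m b] iN unfolding d by blast
  show "(\<integral>x. x i \<partial>PiM {..<m} (\<lambda>_. N)) = (\<integral>x. x \<partial>N)"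
    using integral_distr[OF m b] unfolding d by simp
qed

lemma pair_int:
  fixes N :: "real measure"
  assumes N: "prob_space N" and sN: "sets N = sets borel" and iN: "integrable N (\<lambda>x. x)"
    and ij: "i < (m::nat)" "j < m" "i \<noteq> j"
  shows "integrable (PiM {..<m} (\<lambda>_. N)) (\<lambda>x. \<bar>x i - x j\<bar>)"
    "(\<integral>x. \<bar>x i - x j\<bar> \<partial>PiM {..<m} (\<lambda>_. N)) = (\<integral>y. \<bar>fst y - snd y\<bar> \<partial>(N \<Otimes>\<^sub>M N))"
proof -
  have [measurable_cong]: "sets N = sets borel" by (rule sN)
  have m: "(\<lambda>x. (x i, x j)) \<in> measurable (PiM {..<m} (\<lambda>_. N)) (N \<Otimes>\<^sub>M N)" using ij by simp
  have b: "(\<lambda>y::real\<times>real. \<bar>fst y - snd y\<bar>) \<in> borel_measurable (N \<Otimes>\<^sub>M N)" by measurable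
  show "integrable (PiM {..<m} (\<lambda>_. N)) (\<lambda>x. \<bar>x i - x j\<bar>)"
    using comp_int[OF N sN iN ij(1)] comp_int[OF N sN iN ij(2)] by (intro integrable_abs Bochner_Integration.integrable_diff)
  show "(\<integral>x. \<bar>x i - x j\<bar> \<partial>PiM {..<m} (\<lambda>_. N)) = (\<integral>y. \<bar>fst y - snd y\<bar> \<partial>(N \<Otimes>\<^sub>M N))"
    using integral_distr[OF m b] pair_distr[OF N sN ij] by simp
qed

lemma pw_min:
  fixes x :: "nat \<Rightarrow> real"
  assumes m: "2 \<le> m"
  shows "(\<bar>x 0 - x 1\<bar> + x 0 - x 1) / 2 \<le> x 0 - Min (x ` {..<m})"
    "x 0 - Min (x ` {..<m}) \<le> (\<Sum>j\<in>{1..<m}. (\<bar>x 0 - x j\<bar> + x 0 - x j) / 2)"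
proof -
  have f: "finite (x ` {..<m})" "x ` {..<m} \<noteq> {}" using m by (simp_all add: lessThan_empty_iff)
  have "Min (x ` {..<m}) \<le> x 1" "Min (x ` {..<m}) \<le> x 0" using m f by (auto intro!: Min_le)
  then show "(\<bar>x 0 - x 1\<bar> + x 0 - x 1) / 2 \<le> x 0 - Min (x ` {..<m})" by (simp add: abs_if)
  obtain k where k: "k < m" "Min (x ` {..<m}) = x k" using Min_in[OF f] by auto
  have nn: "\<forall>j\<in>{1..<m}. 0 \<le> (\<bar>x 0 - x j\<bar> + x 0 - x j) / 2" by (auto simp: abs_if)
  show "x 0 - Min (x ` {..<m}) \<le> (\<Sum>j\<in>{1..<m}. (\<bar>x 0 - x j\<bar> + x 0 - x j) / 2)"
  proof (cases "k = 0")
    case True then show ?thesis using k nn by (simp add: sum_nonneg)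
  next
    case False
    then have "k \<in> {1..<m}" using k by auto
    then have "(\<bar>x 0 - x k\<bar> + x 0 - x k) / 2 \<le> (\<Sum>j\<in>{1..<m}. (\<bar>x 0 - x j\<bar> + x 0 - x j) / 2)"
      using nn by (intro member_le_sum) auto
    then show ?thesis using k by (simp add: abs_if split: if_splits)
  qed
qed

lemma pw_max:
  fixes x :: "nat \<Rightarrow> real"
  assumes m: "2 \<le> m"
  shows "(\<bar>x 0 - x 1\<bar> - x 0 + x 1) / 2 \<le> Max (x ` {..<m}) - x 0"
    "Max (x ` {..<m}) - x 0 \<le> (\<Sum>j\<in>{1..<m}. (\<bar>x 0 - x j\<bar> - x 0 + x j) / 2)"
proof -
  have f: "finite (x ` {..<m})" "x ` {..<m} \<noteq> {}" using m by (simp_all add: lessThan_empty_iff)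
  have "x 1 \<le> Max (x ` {..<m})" "x 0 \<le> Max (x ` {..<m})" using m f by (auto intro!: Max_ge)
  then show "(\<bar>x 0 - x 1\<bar> - x 0 + x 1) / 2 \<le> Max (x ` {..<m}) - x 0" by (simp add: abs_if)
  obtain k where k: "k < m" "Max (x ` {..<m}) = x k" using Max_in[OF f] by auto
  have nn: "\<forall>j\<in>{1..<m}. 0 \<le> (\<bar>x 0 - x j\<bar> - x 0 + x j) / 2" by (auto simp: abs_if)
  show "Max (x ` {..<m}) - x 0 \<le> (\<Sum>j\<in>{1..<m}. (\<bar>x 0 - x j\<bar> - x 0 + x j) / 2)"
  proof (cases "k = 0")
    case True then show ?thesis using k nn by (simp add: sum_nonneg)
  next
    case False
    then have "k \<in> {1..<m}" using k by auto
    then have "(\<bar>x 0 - x k\<bar> - x 0 + x k) / 2 \<le> (\<Sum>j\<in>{1..<m}. (\<bar>x 0 - x j\<bar> - x 0 + x j) / 2)"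
      using nn by (intro member_le_sum) auto
    then show ?thesis using k by (simp add: abs_if split: if_splits)
  qed
qed

lemma term_int:
  fixes N :: "real measure"
  assumes N: "prob_space N" and sN: "sets N = sets borel" and iN: "integrable N (\<lambda>x. x)"
    and j: "j \<in> {1..<(m::nat)}" and c: "c = 1 \<or> c = -1"
  shows "integrable (PiM {..<m} (\<lambda>_. N)) (\<lambda>x. (\<bar>x 0 - x j\<bar> + c * (x 0 - x j)) / 2)"
    "(\<integral>x. (\<bar>x 0 - x j\<bar> + c * (x 0 - x j)) / 2 \<partial>PiM {..<m} (\<lambda>_. N)) = (\<integral>y. \<bar>fst y - snd y\<bar> \<partial>(N \<Otimes>\<^sub>M N)) / 2"
proof -
  have ij: "0 < m" "j < m" "0 \<noteq> j" using j by auto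
  note a = pair_int[OF N sN iN ij] comp_int[OF N sN iN ij(1)] comp_int[OF N sN iN ij(2)]
  have i1: "integrable (PiM {..<m} (\<lambda>_. N)) (\<lambda>x. c * (x 0 - x j))"
    using a by (intro integrable_mult_right Bochner_Integration.integrable_diff) auto
  have i2: "integrable (PiM {..<m} (\<lambda>_. N)) (\<lambda>x. \<bar>x 0 - x j\<bar> + c * (x 0 - x j))"
    using a i1 by (intro Bochner_Integration.integrable_add) auto
  show "integrable (PiM {..<m} (\<lambda>_. N)) (\<lambda>x. (\<bar>x 0 - x j\<bar> + c * (x 0 - x j)) / 2)"
    using i2 by (rule integrable_divide_zero)
  have "(\<integral>x. c * (x 0 - x j) \<partial>PiM {..<m} (\<lambda>_. N)) = 0"
    using a by (simp add: Bochner_Integration.integral_diff)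
  then show "(\<integral>x. (\<bar>x 0 - x j\<bar> + c * (x 0 - x j)) / 2 \<partial>PiM {..<m} (\<lambda>_. N)) = (\<integral>y. \<bar>fst y - snd y\<bar> \<partial>(N \<Otimes>\<^sub>M N)) / 2"
    using a i1 by (simp add: Bochner_Integration.integral_add)
qed

lemma meas_minmax:
  fixes N :: "real measure"
  assumes sN: "sets N = sets borel"
  shows "(\<lambda>x. x 0 - Min (x ` {..<m})) \<in> borel_measurable (PiM {..<m::nat} (\<lambda>_. N))"
    "(\<lambda>x. Max (x ` {..<m}) - x 0) \<in> borel_measurable (PiM {..<m::nat} (\<lambda>_. N))"
proof -
  have [measurable_cong]: "sets N = sets borel" by (rule sN)
  have c: "(\<lambda>x. x i) \<in> borel_measurable (PiM {..<m::nat} (\<lambda>_. N))" for i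
  proof (cases "i < m")
    case True
    then have "(\<lambda>x. x i) \<in> measurable (PiM {..<m::nat} (\<lambda>_. N)) N" by simp
    then show ?thesis using measurable_cong_sets[OF refl sN] by metis
  next
    case False
    have "(\<lambda>x. undefined) \<in> borel_measurable (PiM {..<m} (\<lambda>_. N))" by simp
    then show ?thesis
      by (rule measurable_cong[THEN iffD1, rotated]) (use False in \<open>auto simp: space_PiM PiE_def extensional_def\<close>)
  qed
  have "(\<lambda>x. Min ((\<lambda>i. x i) ` {..<m})) \<in> borel_measurable (PiM {..<m::nat} (\<lambda>_. N))"
    "(\<lambda>x. Max ((\<lambda>i. x i) ` {..<m})) \<in> borel_measurable (PiM {..<m::nat} (\<lambda>_. N))"
    by (intro borel_measurable_Min borel_measurable_Max c finite_lessThan)+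
  then show "(\<lambda>x. x 0 - Min (x ` {..<m})) \<in> borel_measurable (PiM {..<m::nat} (\<lambda>_. N))"
    "(\<lambda>x. Max (x ` {..<m}) - x 0) \<in> borel_measurable (PiM {..<m::nat} (\<lambda>_. N))"
    using c by (simp_all add: borel_measurable_diff)
qed

lemma bounds:
  fixes N :: "real measure"
  assumes N: "prob_space N" and sN: "sets N = sets borel" and iN: "integrable N (\<lambda>x. x)"
    and m: "2 \<le> m" and c: "c = 1 \<or> c = -1"
    and F: "F \<in> borel_measurable (PiM {..<m::nat} (\<lambda>_. N))"
    and lo: "\<And>x. (\<bar>x 0 - x 1\<bar> + c * (x 0 - x 1)) / 2 \<le> F x"
    and hi: "\<And>x. F x \<le> (\<Sum>j\<in>{1..<m}. (\<bar>x 0 - x j\<bar> + c * (x 0 - x j)) / 2)"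
  shows "integrable (PiM {..<m} (\<lambda>_. N)) F"
    "(\<integral>y. \<bar>fst y - snd y\<bar> \<partial>(N \<Otimes>\<^sub>M N)) / 2 \<le> (\<integral>x. F x \<partial>PiM {..<m} (\<lambda>_. N))"
    "(\<integral>x. F x \<partial>PiM {..<m} (\<lambda>_. N)) \<le> (real m - 1) * ((\<integral>y. \<bar>fst y - snd y\<bar> \<partial>(N \<Otimes>\<^sub>M N)) / 2)"
proof -
  let ?M = "PiM {..<m} (\<lambda>_. N)"
  let ?D = "(\<integral>y. \<bar>fst y - snd y\<bar> \<partial>(N \<Otimes>\<^sub>M N))"
  have one: "1 \<in> {1..<m}" using m by auto
  note t = term_int[OF N sN iN _ c]
  have ihi: "integrable ?M (\<lambda>x. \<Sum>j\<in>{1..<m}. (\<bar>x 0 - x j\<bar> + c * (x 0 - x j)) / 2)"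
    using t by (intro Bochner_Integration.integrable_sum) auto
  have nn: "0 \<le> (\<bar>a\<bar> + c * a) / 2" for a :: real using c by (auto simp: abs_if)
  have Fnn: "0 \<le> F x" for x using lo[of x] nn[of "x 0 - x 1"] by linarith
  show iF: "integrable ?M F"
  proof (rule Bochner_Integration.integrable_bound[OF ihi F])
    show "AE x in ?M. norm (F x) \<le> norm (\<Sum>j\<in>{1..<m}. (\<bar>x 0 - x j\<bar> + c * (x 0 - x j)) / 2)"
      using hi Fnn by (auto intro!: AE_I2 abs_leI) (smt (verit) hi)
  qed
  have "(\<integral>x. (\<bar>x 0 - x 1\<bar> + c * (x 0 - x 1)) / 2 \<partial>?M) \<le> (\<integral>x. F x \<partial>?M)"
    by (rule Bochner_Integration.integral_mono[OF t(1)[OF one] iF lo])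
  then show "?D / 2 \<le> (\<integral>x. F x \<partial>?M)" using t(2)[OF one] by simp
  have "(\<integral>x. F x \<partial>?M) \<le> (\<integral>x. (\<Sum>j\<in>{1..<m}. (\<bar>x 0 - x j\<bar> + c * (x 0 - x j)) / 2) \<partial>?M)"
    by (rule Bochner_Integration.integral_mono[OF iF ihi hi])
  also have "\<dots> = (\<Sum>j\<in>{1..<m}. (\<integral>x. (\<bar>x 0 - x j\<bar> + c * (x 0 - x j)) / 2 \<partial>?M))"
    using t by (intro Bochner_Integration.integral_sum) auto
  also have "\<dots> = (\<Sum>j\<in>{1..<m}. ?D / 2)"
    using t by (intro sum.cong) auto
  also have "\<dots> = (real m - 1) * (?D / 2)" using m by (simp add: of_nat_diff)
  finally show "(\<integral>x. F x \<partial>?M) \<le> (real m - 1) * (?D / 2)" .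
qed

lemma choose_r:
  fixes D A mu :: real and m :: nat
  assumes D: "0 \<le> D" and mu: "0 < mu" and m: "2 \<le> m"
    and lo: "D / 2 \<le> A" and hi: "A \<le> (real m - 1) * (D / 2)"
  shows "\<exists>r>0. A / (real m * mu) = D / (2 * (mu + r))"
proof (cases "D = 0")
  case True
  then have "A = 0" using lo hi by simp
  then show ?thesis using True by (intro exI[of _ 1]) simp
next
  case False
  then have Dp: "D > 0" using D by simp
  then have Ap: "A > 0" using lo by simp
  have mp: "real m > 0" using m by simp
  have e1: "(real m - 1) * (D / 2) = (real m * D - D) / 2" by (simp add: algebra_simps)
  have "2 * A < D * real m" using hi Dp unfolding e1 by (simp add: mult.commute)
  then have pos: "D * real m - 2 * A > 0" by simp
  define r where "r = mu * (D * real m - 2 * A) / (2 * A)"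
  have rp: "r > 0" unfolding r_def using pos mu Ap by simp
  have eq: "mu + r = mu * D * real m / (2 * A)" unfolding r_def using Ap
    by (simp add: field_simps)
  have "D / (2 * (mu + r)) = A / (real m * mu)"
    unfolding eq using Ap Dp mu mp by (simp add: field_simps)
  then show ?thesis using rp by auto
qed

lemma gini_shift:
  fixes N :: "real measure"
  assumes N: "prob_space N" and sN: "sets N = sets borel" and iN: "integrable N (\<lambda>x. x)"
  shows "gini (distr N borel (\<lambda>x. x + c)) = (\<integral>y. \<bar>fst y - snd y\<bar> \<partial>(N \<Otimes>\<^sub>M N)) / (2 * ((\<integral>x. x \<partial>N) + c))"
proof -
  interpret N: prob_space N by (rule N)
  have [measurable_cong]: "sets N = sets borel" by (rule sN)
  let ?Ns = "distr N borel (\<lambda>x. x + c)"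
  have ms: "(\<lambda>x::real. x + c) \<in> measurable N borel" by measurable
  interpret Ns: prob_space ?Ns by (rule N.prob_space_distr[OF ms])
  have "mean ?Ns = (\<integral>x. x + c \<partial>N)"
    unfolding mean_def by (rule integral_distr[OF ms]) simp
  also have "\<dots> = (\<integral>x. x \<partial>N) + c"
    using iN by (simp add: Bochner_Integration.integral_add N.prob_space)
  finally have mean: "mean ?Ns = (\<integral>x. x \<partial>N) + c" .
  have sf: "sigma_finite_measure ?Ns" by unfold_locales
  have pr: "?Ns \<Otimes>\<^sub>M ?Ns = distr (N \<Otimes>\<^sub>M N) (borel \<Otimes>\<^sub>M borel) (\<lambda>(x, y). (x + c, y + c))"
    by (rule pair_measure_distr[OF ms ms sf])
  have mp: "(\<lambda>(x, y). (x + c, y + c)) \<in> measurable (N \<Otimes>\<^sub>M N) (borel \<Otimes>\<^sub>M (borel :: real measure))"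
    by measurable
  have "(\<integral>y. \<bar>fst y - snd y\<bar> \<partial>(?Ns \<Otimes>\<^sub>M ?Ns)) = (\<integral>y. \<bar>fst y - snd y\<bar> \<partial>(N \<Otimes>\<^sub>M N))"
  proof -
    have fb: "(\<lambda>y::real\<times>real. \<bar>fst y - snd y\<bar>) \<in> borel_measurable (borel \<Otimes>\<^sub>M borel)" by measurable
    have "(\<integral>y. \<bar>fst y - snd y\<bar> \<partial>(?Ns \<Otimes>\<^sub>M ?Ns)) = (\<integral>z. \<bar>fst ((\<lambda>(x, y). (x + c, y + c)) z) - snd ((\<lambda>(x, y). (x + c, y + c)) z)\<bar> \<partial>(N \<Otimes>\<^sub>M N))"
      unfolding pr by (rule integral_distr[OF mp fb])
    also have "\<dots> = (\<integral>y. \<bar>fst y - snd y\<bar> \<partial>(N \<Otimes>\<^sub>M N))"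
      by (rule Bochner_Integration.integral_cong) (auto simp: case_prod_beta)
    finally show ?thesis .
  qed
  then show ?thesis unfolding gini_def mean by simp
qed

theorem proposition2p8:
  fixes P :: "'a measure" and X :: "'a \<Rightarrow> real" and m :: nat
  assumes "prob_space P"
    and "X \<in> borel_measurable P"
    and "AE \<omega> in P. X \<omega> \<ge> 0"
    and "integrable P X"
    and "(\<integral>\<omega>. X \<omega> \<partial>P) > 0"
    and "m \<ge> 2"
  shows "\<exists>r s. r > 0 \<and> s > 0 \<and>
           IG_min m (distr P borel X) = gini (distr P borel (\<lambda>\<omega>. X \<omega> + r)) \<and>
           IG_max m (distr P borel X) = gini (distr P borel (\<lambda>\<omega>. X \<omega> + s))"
proof -
  interpret P: prob_space P by (rule assms(1))
  define N where "N = distr P borel X"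
  have [measurable]: "X \<in> borel_measurable P" by (rule assms(2))
  have N: "prob_space N" unfolding N_def by (rule P.prob_space_distr) simp
  have sN: "sets N = sets borel" unfolding N_def by simp
  have iN: "integrable N (\<lambda>x. x)" unfolding N_def
    using assms(4) by (subst integrable_distr_eq) auto
  have muN: "(\<integral>x. x \<partial>N) = (\<integral>\<omega>. X \<omega> \<partial>P)" unfolding N_def
    by (subst integral_distr) auto
  have shift: "distr P borel (\<lambda>\<omega>. X \<omega> + c) = distr N borel (\<lambda>x. x + c)" for c
    unfolding N_def by (subst distr_distr) (auto simp: comp_def)
  define D where "D = (\<integral>y. \<bar>fst y - snd y\<bar> \<partial>(N \<Otimes>\<^sub>M N))"
  have D0: "0 \<le> D" unfolding D_def by (rule Bochner_Integration.integral_nonneg) simp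
  let ?mu = "\<integral>x. x \<partial>N"
  have mu: "0 < ?mu" using muN assms(5) by simp
  have m: "2 \<le> m" by (rule assms(6))
  note mm = meas_minmax[OF sN, of m]
  have bmin: "D / 2 \<le> (\<integral>x. x 0 - Min (x ` {..<m}) \<partial>PiM {..<m} (\<lambda>_. N))"
     "(\<integral>x. x 0 - Min (x ` {..<m}) \<partial>PiM {..<m} (\<lambda>_. N)) \<le> (real m - 1) * (D / 2)"
  proof -
    have lo: "(\<bar>x 0 - x 1\<bar> + 1 * (x 0 - x 1)) / 2 \<le> x 0 - Min (x ` {..<m})" for x :: "nat \<Rightarrow> real"
      using pw_min(1)[OF m, of x] by simp
    have hi: "x 0 - Min (x ` {..<m}) \<le> (\<Sum>j\<in>{1..<m}. (\<bar>x 0 - x j\<bar> + 1 * (x 0 - x j)) / 2)" for x :: "nat \<Rightarrow> real"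
      using pw_min(2)[OF m, of x] by (simp add: add_diff_eq)
    show "D / 2 \<le> (\<integral>x. x 0 - Min (x ` {..<m}) \<partial>PiM {..<m} (\<lambda>_. N))"
     "(\<integral>x. x 0 - Min (x ` {..<m}) \<partial>PiM {..<m} (\<lambda>_. N)) \<le> (real m - 1) * (D / 2)"
      unfolding D_def using bounds[OF N sN iN m _ mm(1) lo hi] by simp_all
  qed
  have bmax: "D / 2 \<le> (\<integral>x. Max (x ` {..<m}) - x 0 \<partial>PiM {..<m} (\<lambda>_. N))"
     "(\<integral>x. Max (x ` {..<m}) - x 0 \<partial>PiM {..<m} (\<lambda>_. N)) \<le> (real m - 1) * (D / 2)"
  proof -
    have lo: "(\<bar>x 0 - x 1\<bar> + -1 * (x 0 - x 1)) / 2 \<le> Max (x ` {..<m}) - x 0" for x :: "nat \<Rightarrow> real"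
      using pw_max(1)[OF m, of x] by simp
    have e: "(\<Sum>j\<in>{1..<m}. (\<bar>x 0 - x j\<bar> + -1 * (x 0 - x j)) / 2) = (\<Sum>j\<in>{1..<m}. (\<bar>x 0 - x j\<bar> - x 0 + x j) / 2)" for x :: "nat \<Rightarrow> real"
      by (intro sum.cong) auto
    have hi: "Max (x ` {..<m}) - x 0 \<le> (\<Sum>j\<in>{1..<m}. (\<bar>x 0 - x j\<bar> + -1 * (x 0 - x j)) / 2)" for x :: "nat \<Rightarrow> real"
      unfolding e using pw_max(2)[OF m, of x] .
    show "D / 2 \<le> (\<integral>x. Max (x ` {..<m}) - x 0 \<partial>PiM {..<m} (\<lambda>_. N))"
     "(\<integral>x. Max (x ` {..<m}) - x 0 \<partial>PiM {..<m} (\<lambda>_. N)) \<le> (real m - 1) * (D / 2)"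
      unfolding D_def using bounds[OF N sN iN m _ mm(2) lo hi] by simp_all
  qed
  obtain r where r: "r > 0" "IG_min m N = D / (2 * (?mu + r))"
    using choose_r[OF D0 mu m bmin] unfolding IG_min_def mean_def by auto
  obtain s where s: "s > 0" "IG_max m N = D / (2 * (?mu + s))"
    using choose_r[OF D0 mu m bmax] unfolding IG_max_def mean_def by auto
  show ?thesis
    using r s gini_shift[OF N sN iN] unfolding shift D_def N_def[symmetric]
    by (metis D_def)
qed

end
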